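(* Assume $\alpha\in(0,1)$ and fix $\gamma>0$. For every $\delta>0$ there exists $\varepsilon>0$ such that, for every sequence of positive integers $M=M(N)$ with $M(N)/N\to\gamma$, for all $N$ sufficiently large, $$\mathbf P\Big(|\tau\cap((0,N]\times(0,M])|\ge\varepsilon N^\alpha/L(N)\Big)\ge1-\delta.$$
   Context: Let $\mathbb N=\{1,2,\dots\}$. Fix a slowly varying function $L$, and set $K(n)=L(n)n^{-(2+\alpha)}$, normalized so that $\sum_{n,m\in\mathbb N}K(n+m)=1$. Let $\tau$ be a bivariate renewal process with law $\mathbf P$: $\tau_0=(0,0)$, i.i.d. increments with $\mathbf P(\tau_1=(n,m))=K(n+m)$, $n,m\in\mathbb N$; $\tau$ is identified with the random set of its points and $|\cdot|$ denotes cardinality. *)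

theory Defs
  imports "HOL-Probability.Probability"
begin

definition slowly_varying :: "(real \<Rightarrow> real) \<Rightarrow> bool" where
  "slowly_varying L \<longleftrightarrow> L \<in> borel_measurable borel \<and>
     (\<forall>\<^sub>F x in at_top. L x > 0) \<and>
     (\<forall>c>0. ((\<lambda>x. L (c * x) / L x) \<longlongrightarrow> 1) at_top)"

definition Kfun :: "real \<Rightarrow> (real \<Rightarrow> real) \<Rightarrow> nat \<Rightarrow> real" where
  "Kfun \<alpha> L n = L (real n) * real n powr (-(2 + \<alpha>))"

definition renewal_incr :: "real \<Rightarrow> (real \<Rightarrow> real) \<Rightarrow> (nat \<times> nat) pmf" where
  "renewal_incr \<alpha> L =
     embed_pmf (\<lambda>(n, m). if 1 \<le> n \<and> 1 \<le> m then Kfun \<alpha> L (n + m) else 0)"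

definition renewal_law :: "real \<Rightarrow> (real \<Rightarrow> real) \<Rightarrow> (nat \<times> nat) stream measure" where
  "renewal_law \<alpha> L = stream_space (measure_pmf (renewal_incr \<alpha> L))"

definition renewal_pt :: "(nat \<times> nat) stream \<Rightarrow> nat \<Rightarrow> nat \<times> nat" where
  "renewal_pt \<omega> k = ((\<Sum>i<k. fst (\<omega> !! i)), (\<Sum>i<k. snd (\<omega> !! i)))"

definition renewal_set :: "(nat \<times> nat) stream \<Rightarrow> (nat \<times> nat) set" where
  "renewal_set \<omega> = range (renewal_pt \<omega>)"

end

theory Submission
  imports Defs
begin

lemma ennreal_telescope:
  fixes d a :: "nat \<Rightarrow> real"
  assumes "\<And>m. 0 \<le> d m" "\<And>m. d m \<le> a m - a (Suc m)" "\<And>m. 0 \<le> a m"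
  shows "(\<Sum>m. ennreal (d m)) \<le> ennreal (a 0)"
proof -
  have "(\<Sum>m<M. ennreal (d m)) \<le> ennreal (a 0)" for M
  proof -
    have "(\<Sum>m<M. d m) \<le> (\<Sum>m<M. a m - a (Suc m))" by (intro sum_mono assms)
    also have "\<dots> = a 0 - a M" by (rule sum_lessThan_telescope')
    also have "\<dots> \<le> a 0" using assms(3)[of M] by simp
    finally have "(\<Sum>m<M. d m) \<le> a 0" .
    then have "ennreal (\<Sum>m<M. d m) \<le> ennreal (a 0)" by (rule ennreal_leI)
    then show ?thesis using assms(1) by (simp add: sum_ennreal)
  qed
  then show ?thesis unfolding suminf_eq_SUP by (intro SUP_least) auto
qed

lemma mvt_tail:
  fixes x \<beta> :: real
  assumes "x > 0" "\<beta> > 0"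
  shows "(x+1) powr (-1-\<beta>) \<le> (x powr (-\<beta>) - (x+1) powr (-\<beta>)) / \<beta>"
proof -
  have der: "\<And>y. x \<le> y \<Longrightarrow> y \<le> x+1 \<Longrightarrow> ((\<lambda>y. - (y powr (-\<beta>)) / \<beta>) has_real_derivative y powr (-1-\<beta>)) (at y)"
  proof -
    fix y assume "x \<le> y" "y \<le> x+1"
    then have "y > 0" using assms by simp
    have "((\<lambda>y. - (y powr (-\<beta>)) / \<beta>) has_real_derivative - ((-\<beta>) * y powr (-\<beta> - 1)) / \<beta>) (at y)"
      using has_real_derivative_powr[OF \<open>y>0\<close>, of "-\<beta>"] by (intro DERIV_cdivide DERIV_minus)
    also have "- ((-\<beta>) * y powr (-\<beta> - 1)) / \<beta> = y powr (-\<beta>-1)" using assms by simp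
    also have "y powr (-\<beta>-1) = y powr (-1-\<beta>)" by (rule arg_cong[where f="\<lambda>e. y powr e"]) simp
    finally show "((\<lambda>y. - (y powr (-\<beta>)) / \<beta>) has_real_derivative y powr (-1-\<beta>)) (at y)" .
  qed
  obtain z where z: "x < z" "z < x+1" and eq: "- ((x+1) powr (-\<beta>)) / \<beta> - - (x powr (-\<beta>)) / \<beta> = (x+1-x) * z powr (-1-\<beta>)"
    using MVT2[of x "x+1", OF _ der] by auto
  have "(x+1) powr (-1-\<beta>) \<le> z powr (-1-\<beta>)"
    using z assms by (intro powr_mono2') auto
  also have "\<dots> = (x powr (-\<beta>) - (x+1) powr (-\<beta>)) / \<beta>" using eq by (simp add: diff_divide_distrib)
  finally show ?thesis .
qed

lemma mvt_head:
  fixes x \<beta> :: real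
  assumes "x > 0" "\<beta> < 1" "\<beta> > 0"
  shows "(x+1) powr (-\<beta>) \<le> ((x+1) powr (1-\<beta>) - x powr (1-\<beta>)) / (1-\<beta>)"
proof -
  have der: "\<And>y. x \<le> y \<Longrightarrow> y \<le> x+1 \<Longrightarrow> ((\<lambda>y. (y powr (1-\<beta>)) / (1-\<beta>)) has_real_derivative y powr (-\<beta>)) (at y)"
  proof -
    fix y assume "x \<le> y" "y \<le> x+1"
    then have "y > 0" using assms by simp
    have "((\<lambda>y. (y powr (1-\<beta>)) / (1-\<beta>)) has_real_derivative ((1-\<beta>) * y powr (1-\<beta> - 1)) / (1-\<beta>)) (at y)"
      using has_real_derivative_powr[OF \<open>y>0\<close>, of "1-\<beta>"] by (intro DERIV_cdivide)
    also have "((1-\<beta>) * y powr (1-\<beta> - 1)) / (1-\<beta>) = y powr (-\<beta>)" using assms by simp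
    finally show "((\<lambda>y. (y powr (1-\<beta>)) / (1-\<beta>)) has_real_derivative y powr (-\<beta>)) (at y)" .
  qed
  obtain z where z: "x < z" "z < x+1" and eq: "(x+1) powr (1-\<beta>) / (1-\<beta>) - x powr (1-\<beta>) / (1-\<beta>) = (x+1-x) * z powr (-\<beta>)"
    using MVT2[of x "x+1", OF _ der] by auto
  have "(x+1) powr (-\<beta>) \<le> z powr (-\<beta>)"
    using z assms by (intro powr_mono2') auto
  also have "\<dots> = ((x+1) powr (1-\<beta>) - x powr (1-\<beta>)) / (1-\<beta>)" using eq assms by (simp add: diff_divide_distrib)
  finally show ?thesis .
qed

lemma half_half_ennreal: "(1/2::ennreal) + 1/2 = 1"
proof -
  have "(1/2::ennreal) = ennreal (1/2)" by (simp add: divide_ennreal_def)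
  then have "(1/2::ennreal) + 1/2 = ennreal (1/2 + 1/2)" by (simp only: ennreal_plus)
  then show ?thesis by simp
qed

lemma uct_bad_small:
  fixes h :: "real \<Rightarrow> real" and a :: "nat \<Rightarrow> real"
  assumes hm[measurable]: "h \<in> borel_measurable borel"
  and lim: "\<And>v. ((\<lambda>u. h (u+v) - h u) \<longlongrightarrow> 0) at_top"
  and e: "e > 0" and a: "filterlim a at_top sequentially" and b: "0 \<le> b"
  shows "\<exists>m. emeasure lborel {w\<in>{0..b}. \<exists>n\<ge>m. \<bar>h (a n + w) - h (a n)\<bar> \<ge> e} < 1/2"
proof -
  define B where "B m = {w\<in>{0..b}. \<exists>n\<ge>m. \<bar>h (a n + w) - h (a n)\<bar> \<ge> e}" for m
  have Bm: "B m \<in> sets lborel" for m unfolding B_def by measurable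
  have dec: "decseq B" unfolding decseq_def B_def by (auto intro: order_trans)
  have fin: "emeasure lborel (B m) \<noteq> \<infinity>" for m
  proof -
    have "emeasure lborel (B m) \<le> emeasure lborel {0..b}"
      by (intro emeasure_mono) (auto simp: B_def)
    then show ?thesis using b by (auto simp: top_unique)
  qed
  have empty: "(\<Inter>m. B m) = {}"
  proof safe
    fix w assume w: "w \<in> (\<Inter>m. B m)"
    have "((\<lambda>n. h (a n + w) - h (a n)) \<longlongrightarrow> 0) sequentially"
      using filterlim_compose[OF lim[of w] a] by simp
    then have "eventually (\<lambda>n. \<bar>h (a n + w) - h (a n)\<bar> < e) sequentially"
      using e by (auto simp: tendsto_iff dist_real_def)
    then obtain m where m: "\<And>n. n \<ge> m \<Longrightarrow> \<bar>h (a n + w) - h (a n)\<bar> < e"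
      by (auto simp: eventually_sequentially)
    from w have "w \<in> B m" by auto
    then show "w \<in> {}" using m by (force simp: B_def)
  qed
  have "(INF m. emeasure lborel (B m)) = emeasure lborel (\<Inter>m. B m)"
    by (rule INF_emeasure_decseq) (use Bm dec fin in auto)
  also have "\<dots> = 0" using empty by simp
  finally have "(INF m. emeasure lborel (B m)) < 1/2" by (simp add: ennreal_zero_less_divide)
  then obtain m where "emeasure lborel (B m) < 1/2" by (auto simp: INF_less_iff)
  then show ?thesis unfolding B_def by blast
qed

lemma uct_add:
  fixes h :: "real \<Rightarrow> real"
  assumes hm[measurable]: "h \<in> borel_measurable borel"
  and lim: "\<And>v. ((\<lambda>u. h (u+v) - h u) \<longlongrightarrow> 0) at_top"
  and e: "e > 0"
  shows "\<exists>u0. \<forall>u\<ge>u0. \<forall>v\<in>{0..1}. \<bar>h (u+v) - h u\<bar> \<le> e"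
proof (rule ccontr)
  assume "\<not> ?thesis"
  then have "\<forall>n::nat. \<exists>u. u \<ge> real n \<and> (\<exists>v. v \<in> {0..1} \<and> \<bar>h (u+v) - h u\<bar> > e)"
    by (simp add: not_le) (meson atLeastAtMost_iff)
  then obtain u v where u: "\<And>n. u n \<ge> real n" and v: "\<And>n. v n \<in> {0..1}"
    and uv: "\<And>n. \<bar>h (u n + v n) - h (u n)\<bar> > e"
    by metis
  have ulim: "filterlim u at_top sequentially"
    by (rule filterlim_at_top_mono[OF filterlim_real_sequentially]) (use u in auto)
  have uvlim: "filterlim (\<lambda>n. u n + v n) at_top sequentially"
    by (rule filterlim_at_top_mono[OF filterlim_real_sequentially]) (use u v in \<open>auto intro!: always_eventually add_increasing2\<close>)
  have e2: "e/2 > 0" using e by simp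
  obtain m1 where m1: "emeasure lborel {w\<in>{0..2}. \<exists>n\<ge>m1. \<bar>h (u n + w) - h (u n)\<bar> \<ge> e/2} < 1/2"
    using uct_bad_small[OF hm lim e2 ulim, of 2] by auto
  obtain m2 where m2: "emeasure lborel {w\<in>{0..1}. \<exists>n\<ge>m2. \<bar>h ((u n + v n) + w) - h (u n + v n)\<bar> \<ge> e/2} < 1/2"
    using uct_bad_small[OF hm lim e2 uvlim, of 1] by auto
  define n where "n = max m1 m2"
  define B1 where "B1 = {w\<in>{0..2}. \<exists>n\<ge>m1. \<bar>h (u n + w) - h (u n)\<bar> \<ge> e/2}"
  define B2 where "B2 = {w\<in>{0..1}. \<exists>n\<ge>m2. \<bar>h ((u n + v n) + w) - h (u n + v n)\<bar> \<ge> e/2}"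
  define B2' where "B2' = (\<lambda>w. (- v n) + w) -` B2"
  have B1m[measurable]: "B1 \<in> sets borel" unfolding B1_def by measurable
  have B2m[measurable]: "B2 \<in> sets borel" unfolding B2_def by measurable
  have fm: "(\<lambda>w::real. (- v n) + w) \<in> borel_measurable borel" by measurable
  have B2'm: "B2' \<in> sets borel" using measurable_sets[OF fm B2m] by (simp add: B2'_def)
  have fm2: "((+) (- v n)) \<in> measurable lborel borel" by measurable
  have "emeasure (distr lborel borel ((+) (- v n))) B2 = emeasure lborel ((+) (- v n) -` B2 \<inter> space lborel)"
    by (rule emeasure_distr[OF fm2 B2m])
  also have "(+) (- v n) -` B2 \<inter> space lborel = B2'" by (auto simp: B2'_def)
  also have "distr lborel borel ((+) (- v n)) = lborel" by (rule lborel_distr_plus)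
  finally have "emeasure lborel B2 = emeasure lborel B2'" .
  then have mB2': "emeasure lborel B2' < 1/2" using m2 by (simp add: B2_def)
  have sub: "{v n .. v n + 1} \<subseteq> B1 \<union> B2'"
  proof
    fix w assume w: "w \<in> {v n .. v n + 1}"
    show "w \<in> B1 \<union> B2'"
    proof (rule ccontr)
      assume "w \<notin> B1 \<union> B2'"
      then have n1: "w \<notin> B1" and n2: "- v n + w \<notin> B2" by (auto simp: B2'_def)
      have w02: "w \<in> {0..2}" using w v[of n] by auto
      have "\<bar>h (u n + w) - h (u n)\<bar> < e/2"
      proof -
        have "\<not> (\<exists>k\<ge>m1. \<bar>h (u k + w) - h (u k)\<bar> \<ge> e/2)" using n1 w02 unfolding B1_def by blast
        moreover have "n \<ge> m1" by (simp add: n_def)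
        ultimately show ?thesis by (meson not_le)
      qed
      moreover have "- v n + w \<in> {0..1}" using w by auto
      then have "\<bar>h ((u n + v n) + (- v n + w)) - h (u n + v n)\<bar> < e/2"
      proof -
        have "\<not> (\<exists>k\<ge>m2. \<bar>h ((u k + v k) + (- v n + w)) - h (u k + v k)\<bar> \<ge> e/2)" using n2 \<open>- v n + w \<in> {0..1}\<close> unfolding B2_def by blast
        moreover have "n \<ge> m2" by (simp add: n_def)
        ultimately show ?thesis by (meson not_le)
      qed
      moreover have "u n + v n + (- v n + w) = u n + w" by simp
      moreover have tri: "\<And>a b c::real. \<bar>a - b\<bar> < e/2 \<Longrightarrow> \<bar>a - c\<bar> < e/2 \<Longrightarrow> \<bar>c - b\<bar> < e" by arith
      ultimately have "\<bar>h (u n + v n) - h (u n)\<bar> < e" by (metis tri)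
      then show False using uv[of n] by simp
    qed
  qed
  have "ennreal 1 = emeasure lborel {v n .. v n + 1}" by simp
  also have "\<dots> \<le> emeasure lborel (B1 \<union> B2')" by (rule emeasure_mono[OF sub]) (use B1m B2'm in auto)
  also have "\<dots> \<le> emeasure lborel B1 + emeasure lborel B2'"
    by (rule emeasure_subadditive) (use B1m B2'm in auto)
  also have "\<dots> < 1/2 + 1/2"
    using m1 mB2' unfolding B1_def by (intro add_strict_mono) auto
  finally show False by (simp add: half_half_ennreal)
qed

lemma uct_mult:
  assumes sv: "slowly_varying L" and th: "\<theta> > 1"
  shows "\<exists>x0>0. \<forall>x\<ge>x0. L x > 0 \<and> (\<forall>s\<in>{1..2}. L (s*x) \<le> \<theta> * L x \<and> L x \<le> \<theta> * L (s*x))"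
proof -
  have Lm[measurable]: "L \<in> borel_measurable borel" and ev: "\<forall>\<^sub>F x in at_top. L x > 0"
    and rat: "\<And>c. c > 0 \<Longrightarrow> ((\<lambda>x. L (c * x) / L x) \<longlongrightarrow> 1) at_top"
    using sv unfolding slowly_varying_def by auto
  obtain X where X: "\<And>x. x \<ge> X \<Longrightarrow> L x > 0" using ev by (auto simp: eventually_at_top_linorder)
  define h where "h u = ln (L (exp u))" for u
  have hm: "h \<in> borel_measurable borel" unfolding h_def by measurable
  have lim: "((\<lambda>u. h (u+v) - h u) \<longlongrightarrow> 0) at_top" for v
  proof -
    have "((\<lambda>x. L (exp v * x) / L x) \<longlongrightarrow> 1) at_top" by (rule rat) simp
    then have "((\<lambda>u. L (exp v * exp u) / L (exp u)) \<longlongrightarrow> 1) at_top"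
      by (rule filterlim_compose) (rule exp_at_top)
    then have "((\<lambda>u. ln (L (exp v * exp u) / L (exp u))) \<longlongrightarrow> ln 1) at_top"
      by (intro tendsto_ln) auto
    then have *: "((\<lambda>u. ln (L (exp v * exp u) / L (exp u))) \<longlongrightarrow> 0) at_top" by simp
    have "\<forall>\<^sub>F u in at_top. ln (L (exp v * exp u) / L (exp u)) = h (u+v) - h u"
    proof -
      have "\<forall>\<^sub>F u in at_top. u \<ge> ln (max X 1) - min v 0"
        by (rule eventually_ge_at_top)
      then show ?thesis
      proof eventually_elim
        case (elim u)
        have "exp u \<ge> max X 1"
          using elim by (smt (verit, ccfv_SIG) exp_ge_add_one_self exp_le_cancel_iff exp_ln max.cobounded2 min_le_iff_disj)
        then have p1: "L (exp u) > 0" by (intro X) simp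
        have "exp (u+v) \<ge> max X 1"
          using elim by (smt (verit, ccfv_SIG) exp_le_cancel_iff exp_ln max.cobounded2 min_le_iff_disj zero_less_one)
        then have p2: "L (exp v * exp u) > 0" by (intro X) (simp add: exp_add mult.commute)
        show ?case using p1 p2 by (simp add: h_def ln_div exp_add mult.commute)
      qed
    qed
    with * show ?thesis by (rule Lim_transform_eventually)
  qed
  have e: "ln \<theta> > 0" using th by simp
  obtain u0 where u0: "\<And>u v. u \<ge> u0 \<Longrightarrow> v \<in> {0..1} \<Longrightarrow> \<bar>h (u+v) - h u\<bar> \<le> ln \<theta>"
    using uct_add[OF hm lim e] by blast
  define x0 where "x0 = max (exp u0) (max X 1)"
  have "x0 > 0" by (simp add: x0_def)
  moreover have "L x > 0 \<and> (\<forall>s\<in>{1..2}. L (s*x) \<le> \<theta> * L x \<and> L x \<le> \<theta> * L (s*x))" if x: "x \<ge> x0" for x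
  proof -
    have xpos: "x > 0" "x \<ge> X" "x \<ge> exp u0" using x by (auto simp: x0_def)
    have Lx: "L x > 0" using X xpos by simp
    have "L (s*x) \<le> \<theta> * L x \<and> L x \<le> \<theta> * L (s*x)" if s: "s \<in> {1..2}" for s
    proof -
      have sx: "s * x \<ge> x" using s xpos by simp
      then have Lsx: "L (s*x) > 0" using X xpos by (meson order_trans)
      have "ln x \<ge> u0" using xpos by (simp add: ln_ge_iff)
      moreover have "ln s \<in> {0..1}"
      proof -
        have "ln s \<le> ln 2" using s by simp
        then have "ln s \<le> 1" using ln_2_less_1 by linarith
        moreover have "ln s \<ge> 0" using s by simp
        ultimately show ?thesis by simp
      qed
      ultimately have "\<bar>h (ln x + ln s) - h (ln x)\<bar> \<le> ln \<theta>" by (rule u0)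
      moreover have "h (ln x + ln s) = ln (L (s*x))" using xpos s by (simp add: h_def exp_add mult.commute)
      moreover have "h (ln x) = ln (L x)" using xpos by (simp add: h_def)
      ultimately have "ln (L (s*x)) \<le> ln \<theta> + ln (L x)" "ln (L x) \<le> ln \<theta> + ln (L (s*x))" by linarith+
      then have "ln (L (s*x)) \<le> ln (\<theta> * L x)" "ln (L x) \<le> ln (\<theta> * L (s*x))"
        using th Lx Lsx by (simp_all add: ln_mult)
      then show ?thesis using th Lx Lsx by simp
    qed
    then show ?thesis using Lx by blast
  qed
  ultimately show ?thesis by blast
qed

lemma potter:
  assumes sv: "slowly_varying L" and eta: "\<eta> > 0"
  shows "\<exists>x0>0. \<exists>A>0. (\<forall>x\<ge>x0. L x > 0) \<and>
     (\<forall>x y. x0 \<le> x \<longrightarrow> x \<le> y \<longrightarrow> L y \<le> A * (y/x) powr \<eta> * L x \<and> L x \<le> A * (y/x) powr \<eta> * L y)"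
proof -
  define \<theta> where "\<theta> = (2::real) powr \<eta>"
  have th: "\<theta> > 1" using eta by (simp add: \<theta>_def)
  obtain x0 where x0: "x0 > 0" and U: "\<And>x. x \<ge> x0 \<Longrightarrow> L x > 0 \<and> (\<forall>s\<in>{1..2}. L (s*x) \<le> \<theta> * L x \<and> L x \<le> \<theta> * L (s*x))"
    using uct_mult[OF sv th] by blast
  have P: "\<forall>x y. x \<ge> x0 \<longrightarrow> 2^j * x \<le> y \<longrightarrow> y \<le> 2^(j+1) * x \<longrightarrow> L y \<le> \<theta>^(j+1) * L x \<and> L x \<le> \<theta>^(j+1) * L y" for j
  proof (induction j)
    case 0
    show ?case
    proof (intro allI impI)
      fix x y :: real assume a: "x \<ge> x0" "2^0 * x \<le> y" "y \<le> 2^(0+1) * x"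
      then have xp: "x > 0" using x0 by simp
      have "y/x \<in> {1..2}" using a xp by (auto simp: field_simps)
      moreover have "y = (y/x) * x" using xp by simp
      ultimately show "L y \<le> \<theta>^(0+1) * L x \<and> L x \<le> \<theta>^(0+1) * L y" using U[OF a(1)] by (metis power_one_right add_0)
    qed
  next
    case (Suc j)
    show ?case
    proof (intro allI impI)
      fix x y :: real assume a: "x \<ge> x0" "2^Suc j * x \<le> y" "y \<le> 2^(Suc j+1) * x"
      then have xp: "x > 0" using x0 by simp
      have x2: "2*x \<ge> x0" using a xp by simp
      have "2^j * (2*x) \<le> y" "y \<le> 2^(j+1) * (2*x)" using a by (simp_all add: mult.assoc mult.commute mult.left_commute)
      then have IH: "L y \<le> \<theta>^(j+1) * L (2*x) \<and> L (2*x) \<le> \<theta>^(j+1) * L y" using Suc.IH x2 by blast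
      have U2: "L (2*x) \<le> \<theta> * L x \<and> L x \<le> \<theta> * L (2*x)" using U[OF a(1)] by auto
      have tp: "\<theta>^(j+1) \<ge> 0" using th by simp
      have "L y \<le> \<theta>^(j+1) * (\<theta> * L x)" using IH U2 tp by (meson mult_left_mono order_trans)
      moreover have "L x \<le> \<theta> * (\<theta>^(j+1) * L y)" using IH U2 th by (meson less_imp_le mult_left_mono order_trans zero_less_one order.strict_trans)
      ultimately show "L y \<le> \<theta>^(Suc j+1) * L x \<and> L x \<le> \<theta>^(Suc j+1) * L y"
        by (simp add: mult.assoc mult.commute mult.left_commute)
    qed
  qed
  have main: "L y \<le> \<theta> * (y/x) powr \<eta> * L x \<and> L x \<le> \<theta> * (y/x) powr \<eta> * L y" if xy: "x0 \<le> x" "x \<le> y" for x y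
  proof -
    have xp: "x > 0" using xy x0 by simp
    define r where "r = y/x"
    have r1: "r \<ge> 1" using xy xp by (simp add: r_def field_simps)
    define j where "j = nat \<lfloor>log 2 r\<rfloor>"
    have lg: "log 2 r \<ge> 0" using r1 by simp
    have j1: "real j \<le> log 2 r" using lg by (simp add: j_def)
    have j2: "log 2 r < real j + 1" using lg by (simp add: j_def)
    have "(2::real)^j = 2 powr (real j)" by (simp add: powr_realpow)
    also have "\<dots> \<le> 2 powr (log 2 r)" using j1 by simp
    also have "\<dots> = r" using r1 by simp
    finally have rj1: "2^j \<le> r" .
    have "r = 2 powr (log 2 r)" using r1 by simp
    also have "\<dots> \<le> 2 powr (real j + 1)" using j2 by simp
    also have "\<dots> = 2^(j+1)" by (simp add: powr_add powr_realpow)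
    finally have rj2: "r \<le> 2^(j+1)" .
    have "L y \<le> \<theta>^(j+1) * L x \<and> L x \<le> \<theta>^(j+1) * L y"
      using P[of j] xy rj1 rj2 xp by (auto simp: r_def field_simps)
    moreover have "\<theta>^(j+1) \<le> \<theta> * r powr \<eta>"
    proof -
      have "\<theta>^(j+1) = \<theta> * (2 powr (real j)) powr \<eta>"
        by (simp add: \<theta>_def powr_powr powr_realpow[symmetric] mult.commute powr_power)
      also have "\<dots> \<le> \<theta> * r powr \<eta>"
        using rj1 eta th by (intro mult_left_mono powr_mono2) (auto simp: powr_realpow)
      finally show ?thesis .
    qed
    moreover have "L x > 0" "L y > 0" using U xy by auto
    ultimately show ?thesis unfolding r_def
      by (meson less_imp_le mult_right_mono order_trans)
  qed
  show ?thesis using x0 th main U by (intro exI[of _ x0] conjI exI[of _ \<theta>]) auto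
qed

locale rsetup =
  fixes L :: "real \<Rightarrow> real" and \<alpha> :: real
  assumes sv: "slowly_varying L"
    and Lpos: "\<forall>n::nat. n \<ge> 2 \<longrightarrow> L (real n) > 0"
    and hs: "((\<lambda>(n, m). Kfun \<alpha> L (n + m)) has_sum 1) ({1..} \<times> {1..})"
    and a0: "0 < \<alpha>" and a1: "\<alpha> < 1"
begin

definition f :: "nat \<times> nat \<Rightarrow> real" where
  "f = (\<lambda>(n, m). if 1 \<le> n \<and> 1 \<le> m then Kfun \<alpha> L (n + m) else 0)"

lemma K_nonneg: "j \<ge> 2 \<Longrightarrow> Kfun \<alpha> L j \<ge> 0"
  using Lpos by (auto simp: Kfun_def intro!: mult_nonneg_nonneg less_imp_le)

lemma f_nonneg: "f x \<ge> 0"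
  by (cases x) (auto simp: f_def intro!: K_nonneg)

lemma f_integral: "(\<integral>\<^sup>+x. ennreal (f x) \<partial>count_space UNIV) = 1"
proof -
  define S where "S = ({1..} \<times> {1..} :: (nat \<times> nat) set)"
  define g where "g = (\<lambda>(n::nat, m::nat). Kfun \<alpha> L (n + m))"
  have gnn: "x \<in> S \<Longrightarrow> g x \<ge> 0" for x by (cases x) (auto simp: S_def g_def intro!: K_nonneg)
  have hs': "(g has_sum 1) S" using hs by (simp add: S_def g_def)
  then have "g summable_on S" by (rule has_sum_imp_summable)
  then have "Infinite_Sum.abs_summable_on g S"
    using gnn by (subst (asm) summable_on_iff_abs_summable_on_real) auto
  then have as: "Infinite_Set_Sum.abs_summable_on g S" using abs_summable_equivalent by blast
  have "infsetsum g S = infsum g S" by (rule infsetsum_infsum[OF as])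
  also have "\<dots> = 1" using hs' by (rule infsumI)
  finally have "nn_integral (count_space S) (\<lambda>x. ennreal (g x)) = 1"
    using nn_integral_conv_infsetsum[OF as gnn] by simp
  also have "nn_integral (count_space S) (\<lambda>x. ennreal (g x)) = (\<integral>\<^sup>+x. ennreal (g x) * indicator S x \<partial>count_space UNIV)"
    by (rule nn_integral_count_space_indicator) simp
  also have "\<dots> = (\<integral>\<^sup>+x. ennreal (f x) \<partial>count_space UNIV)"
    by (intro nn_integral_cong) (auto simp: f_def g_def S_def split: split_indicator if_splits)
  finally show ?thesis by simp
qed

definition p :: "(nat \<times> nat) pmf" where "p = renewal_incr \<alpha> L"

lemma p_eq: "p = embed_pmf f"
  by (simp add: p_def renewal_incr_def f_def)

lemma pmf_p: "pmf p x = f x"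
  unfolding p_eq using f_nonneg f_integral by (intro pmf_embed_pmf) auto

end

lemma tail_L:
  fixes L :: "real \<Rightarrow> real"
  assumes pot: "\<And>x y. x0 \<le> x \<Longrightarrow> x \<le> y \<Longrightarrow> L y \<le> A*(y/x) powr \<eta> * L x"
  and Lp: "\<And>x. x \<ge> x0 \<Longrightarrow> L x > 0" and A: "A > 0" and eta: "\<eta> \<ge> 0" and b: "\<beta> > \<eta>"
  and n: "real n \<ge> x0" "n \<ge> 1"
  shows "(\<Sum>m. ennreal (L (real (m+n+1)) * real (m+n+1) powr (-1-\<beta>))) \<le> ennreal (A * L n * real n powr (-\<beta>) / (\<beta>-\<eta>))"
proof -
  define c where "c = A * L n * real n powr (-\<eta>)"
  define b' where "b' = \<beta> - \<eta>"
  have b': "b' > 0" using b by (simp add: b'_def)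
  have c: "c \<ge> 0" using A Lp[OF n(1)] by (simp add: c_def)
  define a where "a m = c * real (m+n) powr (-b') / b'" for m
  have "(\<Sum>m. ennreal (L (real (m+n+1)) * real (m+n+1) powr (-1-\<beta>))) \<le> ennreal (a 0)"
  proof (rule ennreal_telescope)
    fix m
    have j: "real (m+n+1) \<ge> x0" "real (m+n+1) \<ge> real n" using n by auto
    show "0 \<le> L (real (m+n+1)) * real (m+n+1) powr (-1-\<beta>)"
      using Lp[OF j(1)] by simp
    show "0 \<le> a m" using c b' by (simp add: a_def)
    have "L (real (m+n+1)) * real (m+n+1) powr (-1-\<beta>) \<le> A * (real (m+n+1) / real n) powr \<eta> * L n * real (m+n+1) powr (-1-\<beta>)"
      using pot[OF n(1) j(2)] by (intro mult_right_mono) auto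
    also have "\<dots> = c * real (m+n+1) powr (-1-b')"
    proof -
      have "(real (m+n+1) / real n) powr \<eta> * real (m+n+1) powr (-1-\<beta>) = real n powr (-\<eta>) * real (m+n+1) powr (-1-b')"
        using n by (simp add: powr_divide powr_add[symmetric] powr_minus_divide b'_def field_simps)
      then show ?thesis by (simp add: c_def mult_ac)
    qed
    also have "\<dots> \<le> c * ((real (m+n)) powr (-b') - (real (m+n)+1) powr (-b')) / b'"
      using mvt_tail[of "real (m+n)" b'] n b' c by (simp add: add_ac mult_left_mono times_divide_eq_right[symmetric] del: times_divide_eq_right)
    also have "\<dots> = a m - a (Suc m)" by (simp add: a_def diff_divide_distrib right_diff_distrib add_ac)
    finally show "L (real (m+n+1)) * real (m+n+1) powr (-1-\<beta>) \<le> a m - a (Suc m)" .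
  qed
  also have "a 0 = A * L n * real n powr (-\<beta>) / (\<beta>-\<eta>)"
    using n by (simp add: a_def c_def b'_def powr_add[symmetric])
  finally show ?thesis .
qed

lemma head_pow:
  assumes "0 < \<beta>" "\<beta> < 1"
  shows "(\<Sum>j\<in>{1..t}. real j powr (-\<beta>)) \<le> real t powr (1-\<beta>) / (1-\<beta>)"
proof (induction t)
  case 0 then show ?case by simp
next
  case (Suc t)
  show ?case
  proof (cases "t = 0")
    case True then show ?thesis using assms by simp
  next
    case False
    then have "(\<Sum>j\<in>{1..Suc t}. real j powr (-\<beta>)) = (\<Sum>j\<in>{1..t}. real j powr (-\<beta>)) + (real t + 1) powr (-\<beta>)"
      by (simp add: add.commute)
    also have "\<dots> \<le> real t powr (1-\<beta>) / (1-\<beta>) + ((real t+1) powr (1-\<beta>) - real t powr (1-\<beta>)) / (1-\<beta>)"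
      using Suc.IH mvt_head[of "real t" \<beta>] assms False by (intro add_mono) auto
    also have "\<dots> = real (Suc t) powr (1-\<beta>) / (1-\<beta>)" by (simp add: diff_divide_distrib add.commute)
    finally show ?thesis .
  qed
qed

lemma head_L:
  fixes L :: "real \<Rightarrow> real"
  assumes pot: "\<And>x y. x0 \<le> x \<Longrightarrow> x \<le> y \<Longrightarrow> L x \<le> A*(y/x) powr \<eta> * L y"
  and Lp: "\<And>x. x \<ge> x0 \<Longrightarrow> L x > 0" and A: "A > 0" and eta: "\<eta> > 0"
  and a: "\<alpha> > 0" "\<alpha> + \<eta> < 1" and n0: "real n0 \<ge> x0" "n0 \<ge> 1" and t: "t \<ge> n0"
  shows "(\<Sum>n\<in>{n0..t}. L (real n) * real n powr (-\<alpha>)) \<le> A * L (real t) * real t powr (1-\<alpha>) / (1-\<alpha>-\<eta>)"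
proof -
  have "(\<Sum>n\<in>{n0..t}. L (real n) * real n powr (-\<alpha>)) \<le> (\<Sum>n\<in>{n0..t}. (A * L (real t) * real t powr \<eta>) * real n powr (-(\<alpha>+\<eta>)))"
  proof (rule sum_mono)
    fix n assume nn: "n \<in> {n0..t}"
    have x: "x0 \<le> real n" "real n \<le> real t" using nn n0 by auto
    have np: "real n > 0" using nn n0 by auto
    have "L (real n) * real n powr (-\<alpha>) \<le> A*(real t/real n) powr \<eta> * L (real t) * real n powr (-\<alpha>)"
      using pot[OF x] by (intro mult_right_mono) auto
    also have "\<dots> = (A * L (real t) * real t powr \<eta>) * real n powr (-(\<alpha>+\<eta>))"
    proof -
      have "real n powr (-(\<alpha>+\<eta>)) = real n powr (-\<alpha>) * real n powr (-\<eta>)"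
        by (simp add: powr_add[symmetric])
      also have "real n powr (-\<eta>) = 1 / real n powr \<eta>" by (simp add: powr_minus_divide)
      finally have e: "real n powr (-(\<alpha>+\<eta>)) = real n powr (-\<alpha>) / real n powr \<eta>" by simp
      show ?thesis unfolding e using np by (simp add: powr_divide)
    qed
    finally show "L (real n) * real n powr (-\<alpha>) \<le> (A * L (real t) * real t powr \<eta>) * real n powr (-(\<alpha>+\<eta>))" .
  qed
  also have "\<dots> = (A * L (real t) * real t powr \<eta>) * (\<Sum>n\<in>{n0..t}. real n powr (-(\<alpha>+\<eta>)))"
    by (simp add: sum_distrib_left)
  also have "\<dots> \<le> (A * L (real t) * real t powr \<eta>) * (\<Sum>n\<in>{1..t}. real n powr (-(\<alpha>+\<eta>)))"
  proof -
    have "real t \<ge> x0" using t n0 by linarith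
    then have "A * L (real t) * real t powr \<eta> \<ge> 0" using A Lp[of "real t"] by simp
    moreover have "(\<Sum>n\<in>{n0..t}. real n powr (-(\<alpha>+\<eta>))) \<le> (\<Sum>n\<in>{1..t}. real n powr (-(\<alpha>+\<eta>)))"
      using n0 by (intro sum_mono2) auto
    ultimately show ?thesis by (metis mult_left_mono)
  qed
  also have "\<dots> \<le> (A * L (real t) * real t powr \<eta>) * (real t powr (1-(\<alpha>+\<eta>)) / (1-(\<alpha>+\<eta>)))"
  proof -
    have "real t \<ge> x0" using t n0 by linarith
    then have "A * L (real t) * real t powr \<eta> \<ge> 0" using A Lp[of "real t"] by simp
    then show ?thesis using head_pow[of "\<alpha>+\<eta>" t] a eta by (intro mult_left_mono) auto
  qed
  also have "\<dots> = A * L (real t) * real t powr (1-\<alpha>) / (1-\<alpha>-\<eta>)"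
    using t n0 by (simp add: powr_add[symmetric] diff_diff_eq)
  finally show ?thesis .
qed

context rsetup
begin

definition marg :: "nat \<Rightarrow> ennreal" where "marg a = (\<Sum>b. ennreal (f (a, b)))"

lemma expect_fst: "(\<integral>\<^sup>+x. g (fst x) \<partial>measure_pmf p) = (\<Sum>a. g a * marg a)"
proof -
  have "(\<integral>\<^sup>+x. g (fst x) \<partial>measure_pmf p) = (\<integral>\<^sup>+x. ennreal (f x) * g (fst x) \<partial>count_space UNIV)"
    by (simp add: nn_integral_measure_pmf pmf_p)
  also have "\<dots> = (\<integral>\<^sup>+a. \<integral>\<^sup>+b. ennreal (f (a,b)) * g a \<partial>count_space UNIV \<partial>count_space UNIV)"
    by (subst nn_integral_fst_count_space[symmetric]) simp
  also have "\<dots> = (\<Sum>a. \<Sum>b. ennreal (f (a,b)) * g a)"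
    by (simp add: nn_integral_count_space_nat)
  also have "\<dots> = (\<Sum>a. g a * marg a)"
    by (simp add: marg_def mult.commute[of _ "g _"])
  finally show ?thesis .
qed

lemma marg_total: "(\<Sum>a. marg a) = 1"
  using expect_fst[of "\<lambda>_. 1"] by simp

lemma marg_le1: "marg a \<le> 1"
  using sum_le_suminf[OF summableI, of "{a}" marg] marg_total by simp

lemma marg_eq: "a \<ge> 1 \<Longrightarrow> marg a = (\<Sum>m. ennreal (Kfun \<alpha> L (m + a + 1)))"
proof -
  assume a: "a \<ge> 1"
  have "marg a = (\<Sum>m. ennreal (f (a, m + 1))) + (\<Sum>j<1. ennreal (f (a, j)))"
    unfolding marg_def by (rule suminf_offset) simp
  also have "\<dots> = (\<Sum>m. ennreal (Kfun \<alpha> L (m + a + 1)))"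
    using a by (simp add: f_def add_ac)
  finally show ?thesis .
qed

end

context rsetup
begin

lemma KB_aux:
  assumes eta: "\<eta> > 0" "\<eta> < \<alpha>" "\<alpha> + \<eta> < 1"
  and A: "A > 0" and Lp: "\<And>x. x \<ge> x0 \<Longrightarrow> L x > 0"
  and pot1: "\<And>x y. x0 \<le> x \<Longrightarrow> x \<le> y \<Longrightarrow> L y \<le> A*(y/x) powr \<eta> * L x"
  and pot2: "\<And>x y. x0 \<le> x \<Longrightarrow> x \<le> y \<Longrightarrow> L x \<le> A*(y/x) powr \<eta> * L y"
  and n0: "real n0 \<ge> x0" "n0 \<ge> 1" and t: "t \<ge> n0"
  shows "(\<Sum>a. ennreal (real (min a t)) * marg a) \<le>
     ennreal (real n0 * real n0 + A * A / ((1+\<alpha>-\<eta>)*(1-\<alpha>-\<eta>)) * (L (real t) * real t powr (1-\<alpha>))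
        + A * A / ((1+\<alpha>-\<eta>)*(\<alpha>-\<eta>)) * (L (real t) * real t powr (1-\<alpha>)))"
proof -
  define D where "D = A / (1+\<alpha>-\<eta>)"
  have D: "D > 0" using A eta a0 by (simp add: D_def)
  have tx: "real t \<ge> x0" "t \<ge> 1" using t n0 by auto
  have Lt: "L (real t) > 0" using Lp tx by simp
  have marg_bd: "marg a \<le> ennreal (D * (L (real a) * real a powr (-1-\<alpha>)))" if a: "a \<ge> n0" for a
  proof -
    have ax: "real a \<ge> x0" "a \<ge> 1" using a n0 by auto
    have "marg a = (\<Sum>m. ennreal (L (real (m+a+1)) * real (m+a+1) powr (-1-(1+\<alpha>))))"
      using ax by (simp add: marg_eq Kfun_def add_ac)
    also have "\<dots> \<le> ennreal (A * L (real a) * real a powr (-(1+\<alpha>)) / ((1+\<alpha>)-\<eta>))"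
      by (rule tail_L[OF pot1 Lp A _ _ ax]) (use eta in auto)
    also have "A * L (real a) * real a powr (-(1+\<alpha>)) / ((1+\<alpha>)-\<eta>) = D * (L (real a) * real a powr (-1-\<alpha>))"
      by (simp add: D_def)
    finally show ?thesis .
  qed
  define g1 where "g1 a = (if a < n0 then ennreal (real n0) else 0)" for a
  define g2 where "g2 a = (if n0 \<le> a \<and> a \<le> t then ennreal (D * (L (real a) * real a powr (-\<alpha>))) else 0)" for a
  define g3 where "g3 a = (if t < a then ennreal (real t * D * (L (real a) * real a powr (-1-\<alpha>))) else 0)" for a
  have pw: "ennreal (real (min a t)) * marg a \<le> g1 a + g2 a + g3 a" for a
  proof (cases "a < n0")
    case True
    have "ennreal (real (min a t)) * marg a \<le> ennreal (real n0) * 1"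
      using True marg_le1 by (intro mult_mono) auto
    then show ?thesis using True t by (simp add: g1_def g2_def g3_def)
  next
    case False
    then have an: "a \<ge> n0" by simp
    have ap: "real a > 0" using an n0 by simp
    have La: "L (real a) > 0" using Lp an n0 by simp
    show ?thesis
    proof (cases "a \<le> t")
      case True
      have "ennreal (real (min a t)) * marg a \<le> ennreal (real a) * ennreal (D * (L (real a) * real a powr (-1-\<alpha>)))"
        using True marg_bd[OF an] by (intro mult_mono) auto
      also have "\<dots> = ennreal (D * (L (real a) * real a powr (-\<alpha>)))"
      proof -
        have "real a powr (1 + (-1-\<alpha>)) = real a powr 1 * real a powr (-1-\<alpha>)" by (rule powr_add)
        then have e: "real a * real a powr (-1-\<alpha>) = real a powr (-\<alpha>)" using ap by simp
        have "real a * (D * (L (real a) * real a powr (-1-\<alpha>))) = D * (L (real a) * real a powr (-\<alpha>))"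
          using e by (simp add: mult_ac)
        then show ?thesis using ap D La by (simp add: ennreal_mult[symmetric])
      qed
      finally show ?thesis using True an by (simp add: g2_def g1_def g3_def)
    next
      case False
      have "ennreal (real (min a t)) * marg a \<le> ennreal (real t) * ennreal (D * (L (real a) * real a powr (-1-\<alpha>)))"
        using False marg_bd[OF an] by (intro mult_mono) auto
      also have "\<dots> = ennreal (real t * D * (L (real a) * real a powr (-1-\<alpha>)))"
        using D La by (simp add: ennreal_mult[symmetric] mult.assoc)
      finally show ?thesis using False an by (simp add: g2_def g1_def g3_def)
    qed
  qed
  have "(\<Sum>a. ennreal (real (min a t)) * marg a) \<le> (\<Sum>a. g1 a + g2 a + g3 a)"
    by (intro suminf_le pw) auto
  also have "\<dots> = (\<Sum>a. g1 a) + (\<Sum>a. g2 a) + (\<Sum>a. g3 a)"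
    by (simp add: suminf_add[symmetric])
  also have "(\<Sum>a. g1 a) = ennreal (real n0 * real n0)"
  proof -
    have "(\<Sum>a. g1 a) = (\<Sum>a<n0. g1 a)" by (rule suminf_finite) (auto simp: g1_def)
    also have "\<dots> = (\<Sum>a<n0. ennreal (real n0))" by (simp add: g1_def)
    also have "\<dots> = ennreal (real n0 * real n0)" by (simp add: ennreal_of_nat_eq_real_of_nat ennreal_mult[symmetric])
    finally show ?thesis .
  qed
  also have "(\<Sum>a. g2 a) \<le> ennreal (D * (A * L (real t) * real t powr (1-\<alpha>) / (1-\<alpha>-\<eta>)))"
  proof -
    have "(\<Sum>a. g2 a) = (\<Sum>a\<in>{n0..t}. g2 a)" by (rule suminf_finite) (auto simp: g2_def)
    also have "\<dots> = (\<Sum>a\<in>{n0..t}. ennreal (D * (L (real a) * real a powr (-\<alpha>))))" by (simp add: g2_def)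
    also have "\<dots> = ennreal (\<Sum>a\<in>{n0..t}. D * (L (real a) * real a powr (-\<alpha>)))"
      using D Lp n0 by (intro sum_ennreal) (auto intro!: mult_nonneg_nonneg less_imp_le)
    also have "(\<Sum>a\<in>{n0..t}. D * (L (real a) * real a powr (-\<alpha>))) = D * (\<Sum>a\<in>{n0..t}. L (real a) * real a powr (-\<alpha>))"
      by (simp add: sum_distrib_left)
    also have "\<dots> \<le> D * (A * L (real t) * real t powr (1-\<alpha>) / (1-\<alpha>-\<eta>))"
      using head_L[OF pot2 Lp A eta(1) a0 eta(3) n0 t] D by (intro mult_left_mono) auto
    finally show ?thesis by (simp add: ennreal_leI)
  qed
  also have "(\<Sum>a. g3 a) \<le> ennreal (real t * D * (A * L (real t) * real t powr (-\<alpha>) / (\<alpha>-\<eta>)))"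
  proof -
    have "(\<Sum>a. g3 a) = (\<Sum>m. g3 (m + (t+1))) + (\<Sum>j<t+1. g3 j)" by (rule suminf_offset) simp
    also have "(\<Sum>j<t+1. g3 j) = 0" by (simp add: g3_def)
    also have "(\<Sum>m. g3 (m + (t+1))) = (\<Sum>m. ennreal (real t * D) * ennreal (L (real (m+t+1)) * real (m+t+1) powr (-1-\<alpha>)))"
    proof (intro suminf_cong)
      fix m
      have Lm: "L (real (m+t+1)) > 0" by (rule Lp) (use tx in simp)
      have "g3 (m + (t+1)) = ennreal ((real t * D) * (L (real (m+t+1)) * real (m+t+1) powr (-1-\<alpha>)))"
        by (simp add: g3_def mult.assoc add_ac)
      also have "\<dots> = ennreal (real t * D) * ennreal (L (real (m+t+1)) * real (m+t+1) powr (-1-\<alpha>))"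
        using D Lm by (intro ennreal_mult) auto
      finally show "g3 (m + (t+1)) = ennreal (real t * D) * ennreal (L (real (m+t+1)) * real (m+t+1) powr (-1-\<alpha>))" .
    qed
    also have "\<dots> = ennreal (real t * D) * (\<Sum>m. ennreal (L (real (m+t+1)) * real (m+t+1) powr (-1-\<alpha>)))"
      by simp
    also have "\<dots> \<le> ennreal (real t * D) * ennreal (A * L (real t) * real t powr (-\<alpha>) / (\<alpha>-\<eta>))"
      by (intro mult_left_mono tail_L[OF pot1 Lp A _ _ tx]) (use eta in auto)
    also have "\<dots> = ennreal (real t * D * (A * L (real t) * real t powr (-\<alpha>) / (\<alpha>-\<eta>)))"
      using D Lt A eta by (subst ennreal_mult[symmetric]) (auto simp: mult.assoc)
    finally show ?thesis by simp
  qed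
  finally have "(\<Sum>a. ennreal (real (min a t)) * marg a) \<le> ennreal (real n0 * real n0) +
     ennreal (D * (A * L (real t) * real t powr (1-\<alpha>) / (1-\<alpha>-\<eta>))) +
     ennreal (real t * D * (A * L (real t) * real t powr (-\<alpha>) / (\<alpha>-\<eta>)))" by (simp add: add_mono)
  also have "\<dots> = ennreal (real n0 * real n0 + D * (A * L (real t) * real t powr (1-\<alpha>) / (1-\<alpha>-\<eta>))
      + real t * D * (A * L (real t) * real t powr (-\<alpha>) / (\<alpha>-\<eta>)))"
    using D A Lt eta a1 by (simp add: ennreal_plus[symmetric] del: ennreal_plus)
  also have "real n0 * real n0 + D * (A * L (real t) * real t powr (1-\<alpha>) / (1-\<alpha>-\<eta>))
      + real t * D * (A * L (real t) * real t powr (-\<alpha>) / (\<alpha>-\<eta>)) =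
      real n0 * real n0 + A * A / ((1+\<alpha>-\<eta>)*(1-\<alpha>-\<eta>)) * (L (real t) * real t powr (1-\<alpha>))
        + A * A / ((1+\<alpha>-\<eta>)*(\<alpha>-\<eta>)) * (L (real t) * real t powr (1-\<alpha>))"
  proof -
    have "real t * real t powr (-\<alpha>) = real t powr (1-\<alpha>)" using tx by (simp add: powr_diff powr_minus_divide)
    then show ?thesis by (simp add: D_def field_simps)
  qed
  finally show ?thesis .
qed

definition "eta = min \<alpha> (1-\<alpha>) / 2"

lemma eta: "eta > 0" "eta < \<alpha>" "\<alpha> + eta < 1"
  using a0 a1 by (auto simp: eta_def min_def field_simps)

lemma potter_inst: "\<exists>x0>0. \<exists>A>0. (\<forall>x\<ge>x0. L x > 0) \<and>
     (\<forall>x y. x0 \<le> x \<longrightarrow> x \<le> y \<longrightarrow> L y \<le> A * (y/x) powr eta * L x \<and> L x \<le> A * (y/x) powr eta * L y)"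
  by (rule potter[OF sv eta(1)])

lemma lower_bd:
  assumes A: "A > 0" and Lp: "\<And>x. x \<ge> x0 \<Longrightarrow> L x > 0"
  and pot2: "\<And>x y. x0 \<le> x \<Longrightarrow> x \<le> y \<Longrightarrow> L x \<le> A*(y/x) powr eta * L y"
  and n0: "real n0 \<ge> x0" "n0 \<ge> 1" and t: "real t \<ge> real n0"
  shows "L (real n0) * real n0 powr (1-\<alpha>) / A \<le> L (real t) * real t powr (1-\<alpha>)"
proof -
  have tp: "real t > 0" using t n0 by simp
  have Lt: "L (real t) > 0" using Lp n0 t by simp
  have "L (real n0) \<le> A * (real t / real n0) powr eta * L (real t)" by (rule pot2[OF n0(1) t])
  then have "L (real n0) * real n0 powr (1-\<alpha>) \<le> A * (real t / real n0) powr eta * L (real t) * real n0 powr (1-\<alpha>)"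
    by (rule mult_right_mono) simp
  also have "\<dots> = A * L (real t) * (real t powr eta * real n0 powr (1-\<alpha>-eta))"
    using n0 tp by (simp add: powr_divide powr_diff powr_add field_simps)
  also have "\<dots> \<le> A * L (real t) * (real t powr eta * real t powr (1-\<alpha>-eta))"
    using A Lt eta n0 t by (intro mult_left_mono powr_mono2) auto
  also have "\<dots> = A * (L (real t) * real t powr (1-\<alpha>))"
    by (simp add: powr_add[symmetric])
  finally show ?thesis using A by (simp add: field_simps)
qed

lemma KB: "\<exists>C>0. \<exists>t0. \<forall>t\<ge>t0. (\<integral>\<^sup>+x. ennreal (real (min (fst x) t)) \<partial>measure_pmf p) \<le> ennreal (C * (L (real t) * real t powr (1-\<alpha>)))"
proof -
  obtain x0 A where x0: "x0 > 0" and A: "A > 0" and Lp: "\<And>x. x \<ge> x0 \<Longrightarrow> L x > 0"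
    and pot: "\<And>x y. x0 \<le> x \<Longrightarrow> x \<le> y \<Longrightarrow> L y \<le> A * (y/x) powr eta * L x \<and> L x \<le> A * (y/x) powr eta * L y"
    using potter_inst by blast
  define n0 where "n0 = nat \<lceil>x0\<rceil> + 1"
  have n0: "real n0 \<ge> x0" "n0 \<ge> 1" unfolding n0_def by linarith+
  define c0 where "c0 = L (real n0) * real n0 powr (1-\<alpha>) / A"
  have c0: "c0 > 0" using Lp n0 A by (simp add: c0_def)
  define C where "C = real n0 * real n0 / c0 + A * A / ((1+\<alpha>-eta)*(1-\<alpha>-eta)) + A * A / ((1+\<alpha>-eta)*(\<alpha>-eta))"
  have C: "C > 0" using c0 A eta a0 a1 n0 unfolding C_def
    by (intro add_pos_pos divide_pos_pos mult_pos_pos) auto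
  have "(\<integral>\<^sup>+x. ennreal (real (min (fst x) t)) \<partial>measure_pmf p) \<le> ennreal (C * (L (real t) * real t powr (1-\<alpha>)))"
    if t: "t \<ge> n0" for t
  proof -
    have "(\<integral>\<^sup>+x. ennreal (real (min (fst x) t)) \<partial>measure_pmf p) = (\<Sum>a. ennreal (real (min a t)) * marg a)"
      by (rule expect_fst)
    also have "\<dots> \<le> ennreal (real n0 * real n0 + A * A / ((1+\<alpha>-eta)*(1-\<alpha>-eta)) * (L (real t) * real t powr (1-\<alpha>))
        + A * A / ((1+\<alpha>-eta)*(\<alpha>-eta)) * (L (real t) * real t powr (1-\<alpha>)))"
      by (rule KB_aux[OF eta A Lp _ _ n0 t]) (use pot in blast)+
    also have "\<dots> \<le> ennreal (C * (L (real t) * real t powr (1-\<alpha>)))"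
    proof (rule ennreal_leI)
      have "c0 \<le> L (real t) * real t powr (1-\<alpha>)"
        unfolding c0_def by (rule lower_bd[OF A Lp _ n0]) (use pot t in auto)
      then have "real n0 * real n0 \<le> real n0 * real n0 / c0 * (L (real t) * real t powr (1-\<alpha>))"
      proof -
        have "real n0 * real n0 * c0 \<le> real n0 * real n0 * (L (real t) * real t powr (1-\<alpha>))"
          using \<open>c0 \<le> _\<close> by (intro mult_left_mono) auto
        then show ?thesis using c0 by (simp add: field_simps)
      qed
      then show "real n0 * real n0 + A * A / ((1+\<alpha>-eta)*(1-\<alpha>-eta)) * (L (real t) * real t powr (1-\<alpha>))
        + A * A / ((1+\<alpha>-eta)*(\<alpha>-eta)) * (L (real t) * real t powr (1-\<alpha>)) \<le> C * (L (real t) * real t powr (1-\<alpha>))"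
        unfolding C_def by (simp add: distrib_right)
    qed
    finally show ?thesis .
  qed
  then show ?thesis using C by blast
qed

end

context rsetup
begin

abbreviation "S \<equiv> stream_space (measure_pmf p)"

lemma S_eq: "renewal_law \<alpha> L = S" by (simp add: renewal_law_def p_def)

lemma prob_S: "prob_space S"
  by (rule prob_space.prob_space_stream_space) (rule prob_space_measure_pmf)

lemma meas_fst[measurable]: "(\<lambda>\<omega>. fst (\<omega> !! i)) \<in> measurable S (count_space UNIV)"
  by (rule measurable_compose[OF measurable_snth]) simp

lemma meas_snd[measurable]: "(\<lambda>\<omega>. snd (\<omega> !! i)) \<in> measurable S (count_space UNIV)"
  by (rule measurable_compose[OF measurable_snth]) simp

lemma meas_snth[measurable]: "(\<lambda>\<omega>. \<omega> !! i) \<in> measurable S (count_space UNIV)"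
  by (rule measurable_compose[OF measurable_snth]) simp

lemma stream_coord: "(\<integral>\<^sup>+\<omega>. g (\<omega> !! i) \<partial>S) = (\<integral>\<^sup>+x. g x \<partial>measure_pmf p)"
proof (induction i)
  case 0
  have "(\<integral>\<^sup>+\<omega>. g (\<omega> !! 0) \<partial>S) = (\<integral>\<^sup>+x. (\<integral>\<^sup>+X. g ((x ## X) !! 0) \<partial>S) \<partial>measure_pmf p)"
    by (rule prob_space.nn_integral_stream_space[OF prob_space_measure_pmf]) simp
  also have "\<dots> = (\<integral>\<^sup>+x. g x \<partial>measure_pmf p)"
    using prob_space.emeasure_space_1[OF prob_S] by simp
  finally show ?case .
next
  case (Suc i)
  have "(\<integral>\<^sup>+\<omega>. g (\<omega> !! Suc i) \<partial>S) = (\<integral>\<^sup>+x. (\<integral>\<^sup>+X. g ((x ## X) !! Suc i) \<partial>S) \<partial>measure_pmf p)"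
    by (rule prob_space.nn_integral_stream_space[OF prob_space_measure_pmf]) simp
  also have "\<dots> = (\<integral>\<^sup>+x. (\<integral>\<^sup>+y. g y \<partial>measure_pmf p) \<partial>measure_pmf p)"
    using Suc.IH by simp
  also have "\<dots> = (\<integral>\<^sup>+y. g y \<partial>measure_pmf p)"
    by (simp add: measure_pmf.emeasure_space_1)
  finally show ?case .
qed

lemma markov:
  assumes [measurable]: "u \<in> borel_measurable S" and c: "c > 0"
  shows "emeasure S {\<omega>\<in>space S. ennreal c \<le> u \<omega>} \<le> (\<integral>\<^sup>+\<omega>. u \<omega> \<partial>S) * ennreal (1/c)"
proof -
  have "emeasure S {\<omega>\<in>space S. ennreal c \<le> u \<omega>} = (\<integral>\<^sup>+\<omega>. indicator {\<omega>\<in>space S. ennreal c \<le> u \<omega>} \<omega> \<partial>S)"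
    by (rule nn_integral_indicator[symmetric]) measurable
  also have "\<dots> \<le> (\<integral>\<^sup>+\<omega>. u \<omega> * ennreal (1/c) \<partial>S)"
  proof (rule nn_integral_mono)
    fix \<omega> assume "\<omega> \<in> space S"
    show "indicator {\<omega>\<in>space S. ennreal c \<le> u \<omega>} \<omega> \<le> u \<omega> * ennreal (1/c)"
    proof (cases "ennreal c \<le> u \<omega>")
      case True
      have "(1::ennreal) = ennreal c * ennreal (1/c)" using c by (simp add: ennreal_mult[symmetric])
      also have "\<dots> \<le> u \<omega> * ennreal (1/c)" using True by (intro mult_right_mono) auto
      finally show ?thesis using True \<open>\<omega> \<in> space S\<close> by simp
    qed simp
  qed
  also have "\<dots> = (\<integral>\<^sup>+\<omega>. u \<omega> \<partial>S) * ennreal (1/c)"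
    by (rule nn_integral_multc) simp
  finally show ?thesis .
qed

end

lemma sum_grow:
  fixes a :: "nat \<Rightarrow> nat"
  assumes "\<And>i. i < k \<Longrightarrow> a i \<ge> 1" "j + d \<le> k"
  shows "(\<Sum>i<j. a i) + d \<le> (\<Sum>i<j+d. a i)"
  using assms(2)
proof (induction d)
  case 0 then show ?case by simp
next
  case (Suc d)
  then have "(\<Sum>i<j. a i) + d \<le> (\<Sum>i<j+d. a i)" by simp
  moreover have "a (j+d) \<ge> 1" using assms(1) Suc.prems by simp
  ultimately show ?case by simp
qed

lemma card_ge:
  assumes pos: "\<And>i. i < k \<Longrightarrow> 1 \<le> fst (\<omega> !! i) \<and> 1 \<le> snd (\<omega> !! i)"
  and sN: "(\<Sum>i<k. fst (\<omega> !! i)) \<le> N" and sM: "(\<Sum>i<k. snd (\<omega> !! i)) \<le> M"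
  shows "k \<le> card (renewal_set \<omega> \<inter> ({1..N} \<times> {1..M}))"
proof -
  define F where "F j = (\<Sum>i<j. fst (\<omega> !! i))" for j
  define G where "G j = (\<Sum>i<j. snd (\<omega> !! i))" for j
  have Fg: "F j + d \<le> F (j+d)" if "j + d \<le> k" for j d
    unfolding F_def by (rule sum_grow) (use pos that in auto)
  have Gg: "G j + d \<le> G (j+d)" if "j + d \<le> k" for j d
    unfolding G_def by (rule sum_grow) (use pos that in auto)
  have rp: "renewal_pt \<omega> j = (F j, G j)" for j by (simp add: renewal_pt_def F_def G_def)
  have sub: "renewal_pt \<omega> ` {1..k} \<subseteq> renewal_set \<omega> \<inter> ({1..N} \<times> {1..M})"
  proof
    fix q assume "q \<in> renewal_pt \<omega> ` {1..k}"
    then obtain j where j: "j \<in> {1..k}" "q = renewal_pt \<omega> j" by auto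
    have "F 0 + j \<le> F (0 + j)" "G 0 + j \<le> G (0+j)" using j by (intro Fg Gg; simp)+
    then have "F j \<ge> 1" "G j \<ge> 1" using j by (simp_all add: F_def G_def)
    moreover have e: "j + (k - j) = k" using j by simp
    have "F j + (k - j) \<le> F k" "G j + (k - j) \<le> G k" using Fg[of j "k-j"] Gg[of j "k-j"] unfolding e by simp_all
    then have "F j \<le> F k" "G j \<le> G k" by linarith+
    then have "F j \<le> N" "G j \<le> M" using sN sM by (simp_all add: F_def G_def)
    ultimately show "q \<in> renewal_set \<omega> \<inter> ({1..N} \<times> {1..M})"
      using j by (auto simp: renewal_set_def rp)
  qed
  have inj: "inj_on (renewal_pt \<omega>) {1..k}"
  proof (rule inj_onI)
    fix j j' assume j: "j \<in> {1..k}" "j' \<in> {1..k}" and eq: "renewal_pt \<omega> j = renewal_pt \<omega> j'"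
    then have "F j = F j'" by (simp add: rp)
    show "j = j'"
    proof (rule ccontr)
      assume "j \<noteq> j'"
      then consider "j < j'" | "j' < j" by linarith
      then show False
      proof cases
        case 1
        have "F j + (j' - j) \<le> F (j + (j' - j))" using j 1 by (intro Fg) simp
        then show False using 1 \<open>F j = F j'\<close> by simp
      next
        case 2
        have "F j' + (j - j') \<le> F (j' + (j - j'))" using j 2 by (intro Fg) simp
        then show False using 2 \<open>F j = F j'\<close> by simp
      qed
    qed
  qed
  have "k = card (renewal_pt \<omega> ` {1..k})" using inj by (simp add: card_image)
  also have "\<dots> \<le> card (renewal_set \<omega> \<inter> ({1..N} \<times> {1..M}))"
    by (rule card_mono[OF _ sub]) (intro finite_Int disjI2 finite_SigmaI; simp)
  finally show ?thesis .
qed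

context rsetup
begin

definition Efst :: "nat \<Rightarrow> ennreal" where
  "Efst t = (\<integral>\<^sup>+x. ennreal (real (min (fst x) t)) \<partial>measure_pmf p)"

lemma f_swap: "f (prod.swap x) = f x"
  by (cases x) (simp add: f_def add.commute conj_commute)

lemma expect_swap: "(\<integral>\<^sup>+x. g (snd x) \<partial>measure_pmf p) = (\<integral>\<^sup>+x. g (fst x) \<partial>measure_pmf p)"
proof -
  have "(\<integral>\<^sup>+x. g (snd x) \<partial>measure_pmf p) = (\<integral>\<^sup>+x. ennreal (f x) * g (snd x) \<partial>count_space UNIV)"
    by (simp add: nn_integral_measure_pmf pmf_p)
  also have "\<dots> = (\<integral>\<^sup>+x. ennreal (f (prod.swap x)) * g (snd (prod.swap x)) \<partial>count_space UNIV)"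
    by (rule nn_integral_bij_count_space[symmetric]) (simp add: bij_betw_def)
  also have "\<dots> = (\<integral>\<^sup>+x. ennreal (f x) * g (fst x) \<partial>count_space UNIV)"
    by (simp add: f_swap)
  also have "\<dots> = (\<integral>\<^sup>+x. g (fst x) \<partial>measure_pmf p)"
    by (simp add: nn_integral_measure_pmf pmf_p)
  finally show ?thesis .
qed

lemma sum_bound:
  assumes N: "N \<ge> 1" and [measurable]: "\<And>i. (\<lambda>\<omega>. h (\<omega> !! i)) \<in> measurable S (count_space UNIV)"
  and hint: "\<And>i. (\<integral>\<^sup>+\<omega>. ennreal (real (min (h (\<omega> !! i)) N)) \<partial>S) = Efst N"
  shows "emeasure S {\<omega>\<in>space S. N \<le> (\<Sum>i<k. min (h (\<omega> !! i)) N)} \<le> ennreal (real k) * Efst N * ennreal (1/real N)"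
proof -
  define u where "u \<omega> = ennreal (real (\<Sum>i<k. min (h (\<omega> !! i)) N))" for \<omega>
  have um[measurable]: "u \<in> borel_measurable S" unfolding u_def by measurable
  have "{\<omega>\<in>space S. N \<le> (\<Sum>i<k. min (h (\<omega> !! i)) N)} = {\<omega>\<in>space S. ennreal (real N) \<le> u \<omega>}"
  proof -
    have e: "(ennreal (real a) \<le> ennreal (real b)) = (a \<le> b)" for a b :: nat
      by (simp add: ennreal_le_iff)
    show ?thesis unfolding u_def e by simp
  qed
  also have "emeasure S \<dots> \<le> (\<integral>\<^sup>+\<omega>. u \<omega> \<partial>S) * ennreal (1/real N)"
    by (rule markov[OF um]) (use N in simp)
  also have "(\<integral>\<^sup>+\<omega>. u \<omega> \<partial>S) = (\<integral>\<^sup>+\<omega>. (\<Sum>i<k. ennreal (real (min (h (\<omega> !! i)) N))) \<partial>S)"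
    by (simp add: u_def of_nat_sum sum_ennreal[symmetric] del: sum_ennreal)
  also have "\<dots> = (\<Sum>i<k. (\<integral>\<^sup>+\<omega>. ennreal (real (min (h (\<omega> !! i)) N)) \<partial>S))"
    by (rule nn_integral_sum) measurable
  also have "\<dots> = ennreal (real k) * Efst N" by (simp add: hint ennreal_of_nat_eq_real_of_nat)
  finally show ?thesis .
qed

lemma B1_bound: "N \<ge> 1 \<Longrightarrow> emeasure S {\<omega>\<in>space S. N \<le> (\<Sum>i<k. min (fst (\<omega> !! i)) N)} \<le> ennreal (real k) * Efst N * ennreal (1/real N)"
  by (rule sum_bound) (use stream_coord[of "\<lambda>x. ennreal (real (min (fst x) N))"] in \<open>auto simp: Efst_def\<close>)

lemma B2_bound: "N \<ge> 1 \<Longrightarrow> emeasure S {\<omega>\<in>space S. N \<le> (\<Sum>i<k. min (snd (\<omega> !! i)) N)} \<le> ennreal (real k) * Efst N * ennreal (1/real N)"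
  by (rule sum_bound) (use stream_coord[of "\<lambda>x. ennreal (real (min (snd x) N))"] expect_swap[of "\<lambda>a. ennreal (real (min a N))"] in \<open>auto simp: Efst_def\<close>)

lemma B3_null: "emeasure S {\<omega>\<in>space S. \<exists>i<k. fst (\<omega> !! i) = 0 \<or> snd (\<omega> !! i) = 0} = 0"
proof -
  define bad where "bad = {x::nat\<times>nat. fst x = 0 \<or> snd x = 0}"
  have "emeasure S {\<omega>\<in>space S. \<exists>i<k. fst (\<omega> !! i) = 0 \<or> snd (\<omega> !! i) = 0}
      = (\<integral>\<^sup>+\<omega>. indicator {\<omega>\<in>space S. \<exists>i<k. fst (\<omega> !! i) = 0 \<or> snd (\<omega> !! i) = 0} \<omega> \<partial>S)"
    by (rule nn_integral_indicator[symmetric]) measurable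
  also have "\<dots> \<le> (\<integral>\<^sup>+\<omega>. (\<Sum>i<k. indicator bad (\<omega> !! i)) \<partial>S)"
  proof (rule nn_integral_mono)
    fix \<omega> assume "\<omega> \<in> space S"
    show "indicator {\<omega>\<in>space S. \<exists>i<k. fst (\<omega> !! i) = 0 \<or> snd (\<omega> !! i) = 0} \<omega> \<le> (\<Sum>i<k. indicator bad (\<omega> !! i) :: ennreal)"
    proof (cases "\<exists>i<k. fst (\<omega> !! i) = 0 \<or> snd (\<omega> !! i) = 0")
      case True
      then obtain i where i: "i < k" "\<omega> !! i \<in> bad" by (auto simp: bad_def)
      have "(1::ennreal) = indicator bad (\<omega> !! i)" using i by simp
      also have "\<dots> \<le> (\<Sum>i<k. indicator bad (\<omega> !! i))"
        using i by (intro member_le_sum) auto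
      finally show ?thesis using True \<open>\<omega> \<in> space S\<close> by simp
    qed simp
  qed
  also have "\<dots> = (\<Sum>i<k. (\<integral>\<^sup>+\<omega>. indicator bad (\<omega> !! i) \<partial>S))"
    by (rule nn_integral_sum) measurable
  also have "\<dots> = (\<Sum>i<k. (\<integral>\<^sup>+x. indicator bad x \<partial>measure_pmf p))"
    by (simp add: stream_coord)
  also have "(\<integral>\<^sup>+x. indicator bad x \<partial>measure_pmf p) = (\<integral>\<^sup>+x. ennreal (f x) * indicator bad x \<partial>count_space UNIV)"
    by (simp add: nn_integral_measure_pmf pmf_p)
  also have "\<dots> = (\<integral>\<^sup>+x. 0 \<partial>count_space (UNIV :: (nat \<times> nat) set))"
    by (rule nn_integral_cong) (auto simp: f_def bad_def split: split_indicator)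
  finally show ?thesis by simp
qed

end

lemma sum_min_lt:
  fixes a :: "nat \<Rightarrow> nat"
  assumes "\<not> N \<le> (\<Sum>i<k. min (a i) N)"
  shows "(\<Sum>i<k. a i) \<le> N"
proof -
  have "a i < N" if "i < k" for i
  proof (rule ccontr)
    assume "\<not> a i < N"
    then have "N = min (a i) N" by simp
    also have "\<dots> \<le> (\<Sum>i<k. min (a i) N)" using that by (intro member_le_sum) auto
    finally show False using assms by simp
  qed
  then have "(\<Sum>i<k. a i) = (\<Sum>i<k. min (a i) N)" by (intro sum.cong) auto
  then show ?thesis using assms by simp
qed

lemma card_as_sum:
  assumes "finite B"
  shows "card (R \<inter> B) = (\<Sum>q\<in>B. if q \<in> R then 1 else 0)"
proof -
  have "R \<inter> B = {q\<in>B. q \<in> R}" by auto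
  then have "card (R \<inter> B) = (\<Sum>q\<in>{q\<in>B. q \<in> R}. 1)" by simp
  also have "\<dots> = (\<Sum>q\<in>B. if q \<in> R then 1 else 0)" using assms by (rule sum.inter_filter)
  finally show ?thesis .
qed

context rsetup
begin

lemma meas_pt[measurable]: "Measurable.pred S (\<lambda>\<omega>. \<exists>j. renewal_pt \<omega> j = q)"
  unfolding renewal_pt_def prod_eq_iff fst_conv snd_conv by measurable

lemma meas_card: "(\<lambda>\<omega>. real (card (renewal_set \<omega> \<inter> ({1..N} \<times> {1..M})))) \<in> borel_measurable S"
proof -
  have mem: "(q \<in> renewal_set \<omega>) = (\<exists>j. renewal_pt \<omega> j = q)" for q \<omega>
    by (auto simp: renewal_set_def)
  have "(\<lambda>\<omega>. real (card (renewal_set \<omega> \<inter> ({1..N} \<times> {1..M})))) =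
        (\<lambda>\<omega>. real (\<Sum>q\<in>{1..N} \<times> {1..M}. if \<exists>j. renewal_pt \<omega> j = q then 1 else 0::nat))"
    by (intro ext) (simp only: card_as_sum[OF finite_SigmaI[OF finite_atLeastAtMost finite_atLeastAtMost]] mem)
  also have "\<dots> \<in> borel_measurable S" by measurable
  finally show ?thesis .
qed

lemma main_bound:
  assumes N: "N \<ge> 1" and M: "M \<ge> 1" and r: "r \<le> real k"
  and b1: "ennreal (real k) * Efst N * ennreal (1/real N) \<le> ennreal r1"
  and b2: "ennreal (real k) * Efst M * ennreal (1/real M) \<le> ennreal r2"
  and r12: "r1 \<ge> 0" "r2 \<ge> 0"
  shows "measure S {\<omega>\<in>space S. r \<le> real (card (renewal_set \<omega> \<inter> ({1..N} \<times> {1..M})))} \<ge> 1 - r1 - r2"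
proof -
  interpret P: prob_space S by (rule prob_S)
  define G where "G = {\<omega>\<in>space S. r \<le> real (card (renewal_set \<omega> \<inter> ({1..N} \<times> {1..M})))}"
  define B1 where "B1 = {\<omega>\<in>space S. N \<le> (\<Sum>i<k. min (fst (\<omega> !! i)) N)}"
  define B2 where "B2 = {\<omega>\<in>space S. M \<le> (\<Sum>i<k. min (snd (\<omega> !! i)) M)}"
  define B3 where "B3 = {\<omega>\<in>space S. \<exists>i<k. fst (\<omega> !! i) = 0 \<or> snd (\<omega> !! i) = 0}"
  have Gm: "G \<in> sets S" unfolding G_def using meas_card[of N M] by measurable
  have B1m: "B1 \<in> sets S" unfolding B1_def by measurable
  have B2m: "B2 \<in> sets S" unfolding B2_def by measurable
  have B3m: "B3 \<in> sets S" unfolding B3_def by measurable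
  have cover: "space S \<subseteq> G \<union> B1 \<union> B2 \<union> B3"
  proof
    fix \<omega> assume \<omega>: "\<omega> \<in> space S"
    show "\<omega> \<in> G \<union> B1 \<union> B2 \<union> B3"
    proof (rule ccontr)
      assume "\<omega> \<notin> G \<union> B1 \<union> B2 \<union> B3"
      then have n: "\<omega> \<notin> G" "\<not> N \<le> (\<Sum>i<k. min (fst (\<omega> !! i)) N)" "\<not> M \<le> (\<Sum>i<k. min (snd (\<omega> !! i)) M)"
        "\<And>i. i < k \<Longrightarrow> 1 \<le> fst (\<omega> !! i) \<and> 1 \<le> snd (\<omega> !! i)"
        using \<omega> by (auto simp: B1_def B2_def B3_def)
      have "k \<le> card (renewal_set \<omega> \<inter> ({1..N} \<times> {1..M}))"
        by (rule card_ge) (use n(4) sum_min_lt[OF n(2)] sum_min_lt[OF n(3)] in auto)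
      then have "\<omega> \<in> G" using \<omega> r by (simp add: G_def)
      then show False using n(1) by simp
    qed
  qed
  have "ennreal 1 = emeasure S (space S)" by (simp add: P.emeasure_space_1)
  also have "\<dots> \<le> emeasure S (G \<union> B1 \<union> B2 \<union> B3)"
    by (rule emeasure_mono[OF cover]) (use Gm B1m B2m B3m in auto)
  also have "\<dots> \<le> emeasure S G + emeasure S B1 + emeasure S B2 + emeasure S B3"
    using Gm B1m B2m B3m
    by (meson add_mono emeasure_subadditive order_refl order_trans sets.Un)
  also have "\<dots> \<le> ennreal (measure S G) + ennreal r1 + ennreal r2 + 0"
  proof (intro add_mono)
    show "emeasure S G \<le> ennreal (measure S G)" by (simp add: P.emeasure_eq_measure)
    show "emeasure S B1 \<le> ennreal r1" unfolding B1_def using B1_bound[OF N, of k] b1 by (rule order_trans)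
    show "emeasure S B2 \<le> ennreal r2" unfolding B2_def using B2_bound[of M k] M b2 by (meson order_trans)
    show "emeasure S B3 \<le> 0" unfolding B3_def using B3_null by simp
  qed
  also have "\<dots> = ennreal (measure S G + r1 + r2)"
    using r12 by (simp add: ennreal_plus[symmetric] del: ennreal_plus)
  finally have "1 \<le> measure S G + r1 + r2"
    using r12 by (subst (asm) ennreal_le_iff) auto
  then show ?thesis unfolding G_def by simp
qed

end

context rsetup
begin

lemma L_small:
  assumes c: "c > 0"
  shows "eventually (\<lambda>N. L (real N) * real N powr (-\<alpha>) \<le> c) sequentially"
proof -
  obtain x0 A where x0: "x0 > 0" and A: "A > 0" and Lp: "\<And>x. x \<ge> x0 \<Longrightarrow> L x > 0"
    and pot: "\<And>x y. x0 \<le> x \<Longrightarrow> x \<le> y \<Longrightarrow> L y \<le> A * (y/x) powr eta * L x \<and> L x \<le> A * (y/x) powr eta * L y"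
    using potter_inst by blast
  define K where "K = A * L x0 * x0 powr (-eta)"
  have K: "K > 0" using A Lp[of x0] x0 by (simp add: K_def)
  have "((\<lambda>N. real N powr (eta - \<alpha>)) \<longlongrightarrow> 0) sequentially"
    by (rule tendsto_neg_powr) (use eta in \<open>auto intro: filterlim_real_sequentially\<close>)
  then have "eventually (\<lambda>N. real N powr (eta - \<alpha>) < c / K) sequentially"
    using c K by (intro order_tendstoD) auto
  moreover have "eventually (\<lambda>N. real N \<ge> x0) sequentially"
    using filterlim_real_sequentially unfolding filterlim_at_top by blast
  ultimately show ?thesis
  proof eventually_elim
    case (elim N)
    have Np: "real N > 0" using elim x0 by linarith
    have "L (real N) \<le> A * (real N / x0) powr eta * L x0" using pot[of x0 "real N"] elim by simp
    then have "L (real N) * real N powr (-\<alpha>) \<le> A * (real N / x0) powr eta * L x0 * real N powr (-\<alpha>)"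
      by (rule mult_right_mono) simp
    also have "\<dots> = K * real N powr (eta - \<alpha>)"
      using Np x0 by (simp add: K_def powr_divide powr_diff powr_minus_divide field_simps)
    also have "\<dots> \<le> K * (c / K)" using elim K by (intro mult_left_mono) auto
    also have "\<dots> = c" using K by simp
    finally show ?case .
  qed
qed

end

theorem lemmaA2:
  fixes L :: "real \<Rightarrow> real" and \<alpha> \<gamma> :: real
  assumes "slowly_varying L"
    and "\<forall>n::nat. n \<ge> 2 \<longrightarrow> L (real n) > 0"
    and "((\<lambda>(n, m). Kfun \<alpha> L (n + m)) has_sum 1) ({1..} \<times> {1..})"
    and "0 < \<alpha>" and "\<alpha> < 1"
    and "\<gamma> > 0"
  shows "\<forall>\<delta>>0. \<exists>\<epsilon>>0. \<forall>M :: nat \<Rightarrow> nat.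
           (\<forall>N. M N \<ge> 1) \<longrightarrow> ((\<lambda>N. real (M N) / real N) \<longlonglongrightarrow> \<gamma>) \<longrightarrow>
           (\<forall>\<^sub>F N in sequentially.
              measure (renewal_law \<alpha> L)
                {\<omega> \<in> space (renewal_law \<alpha> L).
                   real (card (renewal_set \<omega> \<inter> ({1..N} \<times> {1..M N})))
                     \<ge> \<epsilon> * real N powr \<alpha> / L (real N)}
              \<ge> 1 - \<delta>)"
proof -
  interpret rsetup L \<alpha> using assms(1-5) by unfold_locales
  have g: "\<gamma> > 0" by (rule assms(6))
  show ?thesis
  proof (intro allI impI)
    fix \<delta> :: real assume d: "\<delta> > 0"
    obtain C t0 where C: "C > 0" and KBt: "\<And>t. t \<ge> t0 \<Longrightarrow> Efst t \<le> ennreal (C * (L (real t) * real t powr (1-\<alpha>)))"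
      using KB unfolding Efst_def by blast
    obtain x0 A where x0: "x0 > 0" and A: "A > 0" and Lp: "\<And>x. x \<ge> x0 \<Longrightarrow> L x > 0"
      and pot: "\<And>x y. x0 \<le> x \<Longrightarrow> x \<le> y \<Longrightarrow> L y \<le> A * (y/x) powr eta * L x \<and> L x \<le> A * (y/x) powr eta * L y"
      using potter_inst by blast
    define \<rho> where "\<rho> = A * (max (2*\<gamma>) (2/\<gamma>)) powr eta"
    have \<rho>: "\<rho> > 0" using A g by (simp add: \<rho>_def)
    define C' where "C' = C * (1 + \<rho> * (\<gamma>/2) powr (-\<alpha>))"
    have C': "C' > 0" using C \<rho> g by (simp add: C'_def add_pos_nonneg)
    define \<epsilon> where "\<epsilon> = \<delta> / (2 * C')"
    have eps: "\<epsilon> > 0" using d C' by (simp add: \<epsilon>_def)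
    show "\<exists>\<epsilon>>0. \<forall>M :: nat \<Rightarrow> nat.
           (\<forall>N. M N \<ge> 1) \<longrightarrow> ((\<lambda>N. real (M N) / real N) \<longlonglongrightarrow> \<gamma>) \<longrightarrow>
           (\<forall>\<^sub>F N in sequentially.
              measure (renewal_law \<alpha> L)
                {\<omega> \<in> space (renewal_law \<alpha> L).
                   real (card (renewal_set \<omega> \<inter> ({1..N} \<times> {1..M N})))
                     \<ge> \<epsilon> * real N powr \<alpha> / L (real N)}
              \<ge> 1 - \<delta>)"
    proof (intro exI[of _ \<epsilon>] conjI allI impI eps)
      fix M :: "nat \<Rightarrow> nat" assume M1: "\<forall>N. M N \<ge> 1" and Mlim: "(\<lambda>N. real (M N) / real N) \<longlonglongrightarrow> \<gamma>"
      define m where "m = max x0 (real t0)"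
      have ev1: "eventually (\<lambda>N. real (M N) / real N > \<gamma>/2) sequentially"
        using Mlim g by (intro order_tendstoD) auto
      have ev2: "eventually (\<lambda>N. real (M N) / real N < 2*\<gamma>) sequentially"
        using Mlim g by (intro order_tendstoD) auto
      have ev3: "eventually (\<lambda>N. real N \<ge> (2/\<gamma> + 1) * (m + 1)) sequentially"
        using filterlim_real_sequentially unfolding filterlim_at_top by blast
      have ev4: "eventually (\<lambda>N. L (real N) * real N powr (-\<alpha>) \<le> \<delta> / (2 * C')) sequentially"
        using d C' by (intro L_small) simp
      from ev1 ev2 ev3 ev4 show "\<forall>\<^sub>F N in sequentially.
              measure (renewal_law \<alpha> L)
                {\<omega> \<in> space (renewal_law \<alpha> L).
                   real (card (renewal_set \<omega> \<inter> ({1..N} \<times> {1..M N})))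
                     \<ge> \<epsilon> * real N powr \<alpha> / L (real N)}
              \<ge> 1 - \<delta>"
      proof eventually_elim
        case (elim N)
        define R where "R = M N"
        have m0: "m \<ge> x0" "m \<ge> real t0" "m > 0" using x0 by (auto simp: m_def)
        have "real N \<ge> m + 1"
        proof -
          have "(2/\<gamma> + 1) * (m + 1) \<ge> 1 * (m + 1)" using g m0 by (intro mult_right_mono) auto
          then show ?thesis using elim(3) by simp
        qed
        then have N: "real N \<ge> x0" "N \<ge> t0" "N \<ge> 1" "real N > 0" using m0 by linarith+
        have Rlo: "real R > \<gamma>/2 * real N" "real R < 2*\<gamma> * real N"
          using elim(1,2) N by (simp_all add: R_def field_simps)
        have "real R \<ge> m + 1"
        proof -
          have "\<gamma>/2 * real N \<ge> \<gamma>/2 * ((2/\<gamma> + 1) * (m + 1))" using elim(3) g by (intro mult_left_mono) auto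
          also have "\<gamma>/2 * ((2/\<gamma> + 1) * (m + 1)) = (1 + \<gamma>/2) * (m+1)" using g by (simp add: field_simps)
          also have "\<dots> \<ge> m + 1" using g m0 by (simp add: distrib_right)
          finally show ?thesis using Rlo by linarith
        qed
        then have R: "real R \<ge> x0" "R \<ge> t0" "R \<ge> 1" "real R > 0" using m0 by linarith+
        have LN: "L (real N) > 0" using Lp N by simp
        have LR: "L (real R) > 0" using Lp R by simp
        define Q where "Q = L (real N) * real N powr (-\<alpha>)"
        have Q: "Q \<ge> 0" using LN by (simp add: Q_def)
        define r where "r = \<epsilon> * real N powr \<alpha> / L (real N)"
        define k where "k = nat \<lceil>r\<rceil>"
        have r0: "r \<ge> 0" using eps LN by (simp add: r_def)
        have kr: "r \<le> real k" "real k \<le> r + 1" using r0 by (simp_all add: k_def)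
        have rQ: "r * Q = \<epsilon>"
          using LN N by (simp add: r_def Q_def powr_minus_divide field_simps)
        have bnd: "ennreal (real k) * Efst t * ennreal (1/real t) \<le> ennreal (real k * C * (L (real t) * real t powr (-\<alpha>)))"
          if t: "t \<ge> t0" "real t > 0" "L (real t) > 0" for t
        proof -
          have "ennreal (real k) * Efst t * ennreal (1/real t) \<le> ennreal (real k) * ennreal (C * (L (real t) * real t powr (1-\<alpha>))) * ennreal (1/real t)"
            using KBt[OF t(1)] by (intro mult_right_mono mult_left_mono) auto
          also have "\<dots> = ennreal (real k * (C * (L (real t) * real t powr (1-\<alpha>))) * (1/real t))"
            using C t by (simp add: ennreal_mult[symmetric])
          also have "real k * (C * (L (real t) * real t powr (1-\<alpha>))) * (1/real t) = real k * C * (L (real t) * real t powr (-\<alpha>))"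
            using t by (simp add: powr_diff powr_minus_divide field_simps)
          finally show ?thesis .
        qed
        define r1 where "r1 = real k * C * (L (real N) * real N powr (-\<alpha>))"
        define r2 where "r2 = real k * C * (L (real R) * real R powr (-\<alpha>))"
        have r12: "r1 \<ge> 0" "r2 \<ge> 0" using C LN LR by (simp_all add: r1_def r2_def)
        have mb: "measure S {\<omega>\<in>space S. r \<le> real (card (renewal_set \<omega> \<inter> ({1..N} \<times> {1..R})))} \<ge> 1 - r1 - r2"
          by (rule main_bound[OF N(3) R(3) kr(1)])
             (use bnd[OF N(2) N(4) LN] bnd[OF R(2) R(4) LR] r12 in \<open>simp_all add: r1_def r2_def\<close>)
        have LRN: "L (real R) \<le> \<rho> * L (real N)"
        proof (cases "real N \<le> real R")
          case True
          have "L (real R) \<le> A * (real R / real N) powr eta * L (real N)" using pot[OF N(1) True] by simp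
          also have "\<dots> \<le> \<rho> * L (real N)"
          proof -
            have "real R / real N \<le> 2*\<gamma>" using Rlo N by (simp add: field_simps)
            then have "real R / real N \<le> max (2*\<gamma>) (2/\<gamma>)" by simp
            then have "(real R / real N) powr eta \<le> (max (2*\<gamma>) (2/\<gamma>)) powr eta"
              using eta N R by (intro powr_mono2) auto
            then show ?thesis using A LN by (simp add: \<rho>_def)
          qed
          finally show ?thesis .
        next
          case False
          then have le: "real R \<le> real N" by simp
          have "L (real R) \<le> A * (real N / real R) powr eta * L (real N)" using pot[OF R(1) le] by simp
          also have "\<dots> \<le> \<rho> * L (real N)"
          proof -
            have "real N / real R \<le> 2/\<gamma>" using Rlo R g by (simp add: field_simps)
            then have "real N / real R \<le> max (2*\<gamma>) (2/\<gamma>)" by simp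
            then have "(real N / real R) powr eta \<le> (max (2*\<gamma>) (2/\<gamma>)) powr eta"
              using eta N R by (intro powr_mono2) auto
            then show ?thesis using A LN by (simp add: \<rho>_def)
          qed
          finally show ?thesis .
        qed
        have RN: "real R powr (-\<alpha>) \<le> (\<gamma>/2) powr (-\<alpha>) * real N powr (-\<alpha>)"
        proof -
          have "real R powr (-\<alpha>) \<le> (\<gamma>/2 * real N) powr (-\<alpha>)"
            using Rlo g N a0 by (intro powr_mono2') auto
          also have "\<dots> = (\<gamma>/2) powr (-\<alpha>) * real N powr (-\<alpha>)"
            using g N by (intro powr_mult)
          finally show ?thesis .
        qed
        have "r2 \<le> real k * C * (\<rho> * (\<gamma>/2) powr (-\<alpha>) * Q)"
        proof -
          have "L (real R) * real R powr (-\<alpha>) \<le> (\<rho> * L (real N)) * ((\<gamma>/2) powr (-\<alpha>) * real N powr (-\<alpha>))"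
            using LRN RN LR \<rho> LN by (intro mult_mono) auto
          also have "\<dots> = \<rho> * (\<gamma>/2) powr (-\<alpha>) * Q" by (simp add: Q_def mult_ac)
          finally show ?thesis unfolding r2_def using C by (intro mult_left_mono) auto
        qed
        then have "r1 + r2 \<le> real k * C' * Q"
          by (simp add: r1_def Q_def[symmetric] C'_def algebra_simps)
        also have "\<dots> \<le> (r + 1) * C' * Q" using kr C' Q by (intro mult_right_mono) auto
        also have "\<dots> = C' * (r * Q) + C' * Q" by (simp add: algebra_simps)
        also have "\<dots> \<le> C' * \<epsilon> + C' * (\<delta> / (2 * C'))"
        proof -
          have "C' * Q \<le> C' * (\<delta> / (2 * C'))" using elim(4) C' unfolding Q_def by (intro mult_left_mono) auto
          then show ?thesis using rQ by simp
        qed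
        also have "\<dots> = \<delta>" using C' by (simp add: \<epsilon>_def)
        finally have "r1 + r2 \<le> \<delta>" .
        then have "measure S {\<omega>\<in>space S. r \<le> real (card (renewal_set \<omega> \<inter> ({1..N} \<times> {1..R})))} \<ge> 1 - \<delta>"
          using mb by linarith
        then show ?case by (simp add: S_eq r_def R_def)
      qed
    qed
  qed
qed


end
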